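(* Let $\mathcal F\subset 2^{[n]}$, let $i\in[n]$, and let $\mathcal G=S_i(\mathcal F)$. Then for every positive integer $r$, $$\max\{|W(F_1,\ldots,F_r)|: F_1,\ldots,F_r\in\mathcal F\}\ \ge\ \max\{|W(G_1,\ldots,G_r)|: G_1,\ldots,G_r\in\mathcal G\}.$$
   Context: For sets $A_1,\ldots,A_r\subset[n]$, $W(A_1,\ldots,A_r)=(A_1\cup\cdots\cup A_r)\setminus(A_1\cap\cdots\cap A_r)$. For $\mathcal F\subset 2^{[n]}$ and $i\in[n]$, let $\mathcal F(i)=\{F\setminus\{i\}: i\in F\in\mathcal F\}$ and $\mathcal F(\bar i)=\{F\in\mathcal F: i\notin F\}$, both subfamilies of $2^{[n]\setminus\{i\}}$; a family $\mathcal G\subset 2^{[n]}$ is uniquely determined by $\mathcal G(i)$ and $\mathcal G(\bar i)$. The squashed family $S_i(\mathcal F)$ is the unique family $\mathcal G\subset 2^{[n]}$ with $\mathcal G(i)=\mathcal F(i)\cap\mathcal F(\bar i)$ and $\mathcal G(\bar i)=\mathcal F(i)\cup\mathcal F(\bar i)$. In the maxima the $r$ sets need not be distinct. *)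

theory Defs
  imports Main
begin

text \<open>W(A_1,...,A_r): union minus intersection; the r-tuple is A 0, ..., A (r-1).\<close>
definition W :: "nat \<Rightarrow> (nat \<Rightarrow> 'a set) \<Rightarrow> 'a set" where
  "W r A = (\<Union>j<r. A j) - (\<Inter>j<r. A j)"

definition fam_with :: "'a \<Rightarrow> 'a set set \<Rightarrow> 'a set set" where
  "fam_with i F = {X - {i} | X. X \<in> F \<and> i \<in> X}"

definition fam_without :: "'a \<Rightarrow> 'a set set \<Rightarrow> 'a set set" where
  "fam_without i F = {X \<in> F. i \<notin> X}"

text \<open>The squashed family: G(i) = F(i) \<inter> F(bar i), G(bar i) = F(i) \<union> F(bar i).\<close>
definition squash :: "'a \<Rightarrow> 'a set set \<Rightarrow> 'a set set" where
  "squash i F = (insert i ` (fam_with i F \<inter> fam_without i F))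
                \<union> (fam_with i F \<union> fam_without i F)"

end

theory Submission
  imports Defs
begin

lemma W_minus: "W r A - {i} = W r (\<lambda>j. A j - {i}) - {i}"
  unfolding W_def by auto

lemma W_bound:
  assumes "\<forall>j<r. A j \<subseteq> {1..n}"
  shows "card (W r A) \<le> n"
proof -
  have "W r A \<subseteq> {1..n}" using assms unfolding W_def by auto
  then show ?thesis using card_mono[of "{1..n}" "W r A"] by simp
qed

lemma squash_mem:
  assumes "X \<in> squash i F"
  shows "(i \<in> X \<longrightarrow> X \<in> F \<and> X - {i} \<in> F) \<and> (X \<in> F \<or> insert i X \<in> F)"
  using assms unfolding squash_def fam_with_def fam_without_def
  by (auto simp: insert_absorb)

lemma squash_sub:
  assumes "F \<subseteq> Pow {1..n}" "i \<in> {1..n}"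
  shows "squash i F \<subseteq> Pow {1..n}"
  using assms unfolding squash_def fam_with_def fam_without_def by auto

lemma key:
  assumes A: "\<forall>j<r. A j \<in> squash i F"
  shows "\<exists>B. (\<forall>j<r. B j \<in> F) \<and> W r A \<subseteq> W r B"
proof -
  define f where "f j = (if A j \<in> F then A j else insert i (A j))" for j
  have fF: "\<forall>j<r. f j \<in> F" using A squash_mem unfolding f_def by metis
  have ftr: "\<And>j. f j - {i} = A j - {i}" unfolding f_def by auto
  have fi: "\<And>j. i \<in> A j \<Longrightarrow> i \<in> f j" unfolding f_def by auto
  show ?thesis
  proof (cases "i \<in> W r A")
    case False
    have "W r A \<subseteq> W r f"
    proof
      fix x assume x: "x \<in> W r A"
      then have "x \<noteq> i" using False by auto
      then have "x \<in> W r A - {i}" using x by auto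
      also have "W r A - {i} = W r f - {i}"
        using W_minus[of r A i] W_minus[of r f i] ftr by simp
      finally show "x \<in> W r f" by auto
    qed
    then show ?thesis using fF by blast
  next
    case True
    then obtain a b where ab: "a < r" "b < r" "i \<in> A a" "i \<notin> A b"
      unfolding W_def by auto
    have Aa: "A a \<in> F" "A a - {i} \<in> F" using squash_mem[of "A a" i F] A ab by auto
    have mainB: "W r A \<subseteq> W r B" if BF: "\<forall>j. B j - {i} = A j - {i}"
      and Bi: "i \<in> W r B" for B
    proof
      fix x assume x: "x \<in> W r A"
      show "x \<in> W r B"
      proof (cases "x = i")
        case True then show ?thesis using Bi by simp
      next
        case False
        then have "x \<in> W r A - {i}" using x by auto
        also have "W r A - {i} = W r B - {i}"
          using W_minus[of r A i] W_minus[of r B i] BF by simp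
        finally show ?thesis by auto
      qed
    qed
    show ?thesis
    proof (cases "\<exists>c<r. i \<notin> f c")
      case True
      then obtain c where "c < r" "i \<notin> f c" by auto
      then have "i \<in> W r f" using ab fi unfolding W_def by auto
      then show ?thesis using mainB[of f] ftr fF by blast
    next
      case False
      define B where "B = f(a := A a - {i})"
      have "a \<noteq> b" using ab by auto
      have "i \<in> B b" using False ab `a \<noteq> b` unfolding B_def by auto
      moreover have "i \<notin> B a" unfolding B_def by auto
      ultimately have "i \<in> W r B" using ab unfolding W_def by auto
      moreover have "\<forall>j. B j - {i} = A j - {i}" unfolding B_def using ftr by auto
      moreover have "\<forall>j<r. B j \<in> F" unfolding B_def using fF Aa by auto
      ultimately show ?thesis using mainB by blast
    qed
  qed
qed

theorem lemma1:
  fixes n i r :: nat and F :: "nat set set"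
  assumes "F \<subseteq> Pow {1..n}" and "i \<in> {1..n}" and "r \<ge> 1"
  shows "Max {card (W r A) | A. \<forall>j<r. A j \<in> F}
           \<ge> Max {card (W r A) | A. \<forall>j<r. A j \<in> squash i F}"
proof (cases "F = {}")
  case True
  then have "squash i F = {}" unfolding squash_def fam_with_def fam_without_def by auto
  then show ?thesis by (simp only: True order_refl)
next
  case False
  let ?SF = "{card (W r A) | A. \<forall>j<r. A j \<in> F}"
  let ?SG = "{card (W r A) | A. \<forall>j<r. A j \<in> squash i F}"
  have sq: "squash i F \<subseteq> Pow {1..n}" using squash_sub assms by blast
  have finF: "finite ?SF"
  proof (rule finite_subset[of _ "{..n}"])
    show "?SF \<subseteq> {..n}"
    proof
      fix k assume "k \<in> ?SF"
      then obtain A where "\<forall>j<r. A j \<in> F" "k = card (W r A)" by blast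
      then show "k \<in> {..n}" using assms(1) W_bound[of r A n] by auto
    qed
  qed simp
  have finG: "finite ?SG"
  proof (rule finite_subset[of _ "{..n}"])
    show "?SG \<subseteq> {..n}"
    proof
      fix k assume "k \<in> ?SG"
      then obtain A where "\<forall>j<r. A j \<in> squash i F" "k = card (W r A)" by blast
      then show "k \<in> {..n}" using sq W_bound[of r A n] by auto
    qed
  qed simp
  obtain X where X: "X \<in> F" using False by auto
  have "X - {i} \<in> fam_with i F \<union> fam_without i F"
  proof (cases "i \<in> X")
    case True
    then show ?thesis using X unfolding fam_with_def by blast
  next
    case False
    then show ?thesis using X unfolding fam_without_def by simp
  qed
  then have Xs: "X - {i} \<in> squash i F" unfolding squash_def by (rule UnI2)
  have "(\<lambda>j. X - {i}) \<in> {A. \<forall>j<r. A j \<in> squash i F}" using Xs by simp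
  then have "card (W r (\<lambda>j. X - {i})) \<in> ?SG" by blast
  then have "?SG \<noteq> {}" by blast
  then have "Max ?SG \<in> ?SG" using finG Max_in by blast
  then obtain A where A: "\<forall>j<r. A j \<in> squash i F" and eq: "Max ?SG = card (W r A)" by auto
  obtain B where B: "\<forall>j<r. B j \<in> F" and sub: "W r A \<subseteq> W r B" using key[OF A] by blast
  have "finite (W r B)"
  proof (rule finite_subset[of _ "{1..n}"])
    have "\<forall>j<r. B j \<subseteq> {1..n}" using B assms(1) by blast
    then show "W r B \<subseteq> {1..n}" unfolding W_def by blast
  qed simp
  then have "card (W r A) \<le> card (W r B)" using sub card_mono by blast
  also have "card (W r B) \<le> Max ?SF" using B finF by (intro Max_ge) auto
  finally show ?thesis using eq by simp
qed

end
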